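(* There exists an instance of \textsc{MaxMSReco}, i.e., a monotone submodular $f:2^{[n]}\to\mathbb{R}_+$ and $X,Y\in\binom{[n]}{k}$, such that the optimal reconfiguration sequence $\mathcal{S}^*$ from $X$ to $Y$ under token jumping has $f(\mathcal{S}^* )=1$, while every reconfiguration sequence $\mathcal{S}$ from $X$ to $Y$ under token jumping all of whose sets are subsets of $X\cup Y$ has $f(\mathcal{S})\le\frac34$. (In particular the optimal sequence must use elements outside $X\cup Y$.)
   Context: $f$ is submodular if $f(S)+f(T)\ge f(S\cap T)+f(S\cup T)$ and monotone if $f(S)\le f(T)$ for $S\subseteq T$. Two sets are adjacent under token jumping if they have the same size $s$ and intersection of size $s-1$. A reconfiguration sequence from $X$ to $Y$ is a sequence of sets starting at $X$, ending at $Y$, with consecutive sets adjacent; its value is the minimum of $f$ over its sets. \textsc{MaxMSReco} asks for a reconfiguration sequence under token jumping maximizing this value. *)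

theory Defs
  imports Complex_Main
begin

text \<open>Ground set [n] is rendered as {..<n}. Set functions are f :: nat set => real,
 constrained only on subsets of the ground set.\<close>

definition monotone_on_ground :: "nat \<Rightarrow> (nat set \<Rightarrow> real) \<Rightarrow> bool" where
  "monotone_on_ground n f \<longleftrightarrow>
     (\<forall>S T. S \<subseteq> T \<and> T \<subseteq> {..<n} \<longrightarrow> f S \<le> f T)"

definition submodular_on_ground :: "nat \<Rightarrow> (nat set \<Rightarrow> real) \<Rightarrow> bool" where
  "submodular_on_ground n f \<longleftrightarrow>
     (\<forall>S T. S \<subseteq> {..<n} \<and> T \<subseteq> {..<n} \<longrightarrow> f S + f T \<ge> f (S \<inter> T) + f (S \<union> T))"

definition nonneg_on_ground :: "nat \<Rightarrow> (nat set \<Rightarrow> real) \<Rightarrow> bool" where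
  "nonneg_on_ground n f \<longleftrightarrow> (\<forall>S. S \<subseteq> {..<n} \<longrightarrow> f S \<ge> 0)"

definition tj_adjacent :: "nat set \<Rightarrow> nat set \<Rightarrow> bool" where
  "tj_adjacent A B \<longleftrightarrow> card A = card B \<and> card (A \<inter> B) + 1 = card A"

definition reco_seq :: "nat \<Rightarrow> nat set \<Rightarrow> nat set \<Rightarrow> nat set list \<Rightarrow> bool" where
  "reco_seq n X Y S \<longleftrightarrow> S \<noteq> [] \<and> hd S = X \<and> last S = Y \<and>
     (\<forall>A\<in>set S. A \<subseteq> {..<n}) \<and>
     (\<forall>i. Suc i < length S \<longrightarrow> tj_adjacent (S ! i) (S ! Suc i))"

definition seq_value :: "(nat set \<Rightarrow> real) \<Rightarrow> nat set list \<Rightarrow> real" where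
  "seq_value f S = Min (f ` set S)"

end

theory Submission
  imports Defs
begin

definition C :: "nat \<Rightarrow> nat set" where
  "C i = (if i=0 then {0,1} else if i=1 then {2,3} else if i=2 then {0,2}
          else if i=3 then {1,3} else if i=4 then {0,1,2,3} else {})"

definition cov :: "nat set \<Rightarrow> nat set" where "cov S = \<Union>(C ` S)"

definition ff :: "nat set \<Rightarrow> real" where "ff S = real (card (cov S)) / 4"

lemma C_sub: "C i \<subseteq> {0,1,2,3}" by (auto simp: C_def)
lemma cov_sub: "cov S \<subseteq> {0,1,2,3}" using C_sub by (auto simp: cov_def)
lemma cov_fin: "finite (cov S)" using cov_sub finite_subset by blast

lemma ff_le1: "ff S \<le> 1"
proof -
  have "card (cov S) \<le> card {0::nat,1,2,3}" by (rule card_mono) (use cov_sub in auto)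
  then show ?thesis by (simp add: ff_def)
qed

lemma ff_mono: "S \<subseteq> T \<Longrightarrow> ff S \<le> ff T"
proof -
  assume "S \<subseteq> T"
  then have "cov S \<subseteq> cov T" by (auto simp: cov_def)
  then have "card (cov S) \<le> card (cov T)" using cov_fin card_mono by blast
  then show ?thesis by (simp add: ff_def)
qed

lemma ff_sub: "ff S + ff T \<ge> ff (S \<inter> T) + ff (S \<union> T)"
proof -
  have u: "cov (S \<union> T) = cov S \<union> cov T" by (auto simp: cov_def)
  have i: "cov (S \<inter> T) \<subseteq> cov S \<inter> cov T" by (auto simp: cov_def)
  have "card (cov (S \<inter> T)) \<le> card (cov S \<inter> cov T)"
    using i cov_fin card_mono by (metis finite_Int)
  moreover have "card (cov S \<union> cov T) + card (cov S \<inter> cov T) = card (cov S) + card (cov T)"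
    using card_Un_Int cov_fin by metis
  ultimately have "card (cov (S \<inter> T)) + card (cov (S \<union> T)) \<le> card (cov S) + card (cov T)"
    using u by simp
  then have "real (card (cov (S \<inter> T))) + real (card (cov (S \<union> T))) \<le> real (card (cov S)) + real (card (cov T))"
    by linarith
  then show ?thesis by (simp add: ff_def divide_simps)
qed

lemma pairs: "A \<subseteq> {0,1,2,3::nat} \<Longrightarrow> card A = 2 \<Longrightarrow> A \<noteq> {0,1} \<Longrightarrow> A \<noteq> {2,3} \<Longrightarrow> ff A = 3/4"
proof -
  assume a: "A \<subseteq> {0,1,2,3::nat}" "card A = 2" "A \<noteq> {0,1}" "A \<noteq> {2,3}"
  then obtain x y where xy: "A = {x,y}" "x \<noteq> y" by (auto simp: card_2_iff)
  with a have "x \<in> {0,1,2,3}" "y \<in> {0,1,2,3}" by auto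
  with xy a show ?thesis
    by (auto simp: ff_def cov_def C_def insert_commute)
qed

lemma chain: "xs \<noteq> [] \<Longrightarrow> hd xs = a \<Longrightarrow> last xs = b \<Longrightarrow> a \<noteq> b \<Longrightarrow> set xs \<subseteq> {a,b} \<Longrightarrow>
   \<exists>i. Suc i < length xs \<and> xs!i = a \<and> xs!Suc i = b"
proof (induction xs)
  case Nil then show ?case by simp
next
  case (Cons x xs)
  then have xa: "x = a" by simp
  show ?case
  proof (cases "xs = []")
    case True then show ?thesis using Cons by simp
  next
    case False
    then have "hd xs = a \<or> hd xs = b" using Cons.prems(5) hd_in_set by auto
    then show ?thesis
    proof
      assume "hd xs = a"
      then obtain i where "Suc i < length xs \<and> xs!i = a \<and> xs!Suc i = b"
        using Cons.IH False Cons.prems by auto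
      then show ?thesis by (intro exI[of _ "Suc i"]) auto
    next
      assume "hd xs = b"
      moreover have "xs!0 = hd xs" using False by (simp add: hd_conv_nth)
      ultimately have "Suc 0 < length (x#xs) \<and> (x#xs)!0 = a \<and> (x#xs)!Suc 0 = b"
        using False xa by simp
      then show ?thesis by blast
    qed
  qed
qed

lemma cards: "reco_seq n X Y S \<Longrightarrow> i < length S \<Longrightarrow> card (S!i) = card X"
proof (induction i)
  case 0 then show ?case by (auto simp: reco_seq_def hd_conv_nth)
next
  case (Suc i)
  then have "tj_adjacent (S!i) (S!Suc i)" by (auto simp: reco_seq_def)
  then show ?case using Suc by (auto simp: tj_adjacent_def)
qed

theorem mainTheorem9:
  shows "\<exists>(n::nat) (k::nat) (f::nat set \<Rightarrow> real) X Y.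
     nonneg_on_ground n f \<and> monotone_on_ground n f \<and> submodular_on_ground n f \<and>
     X \<subseteq> {..<n} \<and> Y \<subseteq> {..<n} \<and> card X = k \<and> card Y = k \<and>
     (\<exists>S. reco_seq n X Y S \<and> seq_value f S = 1) \<and>
     (\<forall>S. reco_seq n X Y S \<longrightarrow> seq_value f S \<le> 1) \<and>
     (\<forall>S. reco_seq n X Y S \<and> (\<forall>A\<in>set S. A \<subseteq> X \<union> Y) \<longrightarrow> seq_value f S \<le> 3/4)"
proof (intro exI conjI)
  show "nonneg_on_ground 5 ff" by (simp add: nonneg_on_ground_def ff_def)
  show "monotone_on_ground 5 ff" by (simp add: monotone_on_ground_def ff_mono)
  show "submodular_on_ground 5 ff" by (simp add: submodular_on_ground_def ff_sub)
  show "{0,1::nat} \<subseteq> {..<5}" "{2,3::nat} \<subseteq> {..<5}" by auto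
  show "card {0,1::nat} = 2" "card {2,3::nat} = 2" by auto
  let ?S = "[{0,1}, {0,4}, {2,4}, {2,3::nat}]"
  show "reco_seq 5 {0,1} {2,3} ?S"
    unfolding reco_seq_def tj_adjacent_def
  proof (intro conjI allI impI, goal_cases)
    case (5 i)
    then have "i = 0 \<or> i = 1 \<or> i = 2" by auto
    then show ?case
      by (auto simp: insert_commute)
  next
    case (6 i)
    then have "i = 0 \<or> i = 1 \<or> i = 2" by auto
    then show ?case
      by (auto simp: insert_commute)
  qed auto
  show "seq_value ff ?S = 1"
    by (simp add: seq_value_def ff_def cov_def C_def insert_commute)
  show "\<forall>S. reco_seq 5 {0,1} {2,3} S \<longrightarrow> seq_value ff S \<le> 1"
  proof (intro allI impI)
    fix S assume "reco_seq 5 {0,1} {2,3} S"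
    then have "S \<noteq> []" by (simp add: reco_seq_def)
    then have "Min (ff ` set S) \<le> ff (hd S)" by (simp add: Min_le)
    then show "seq_value ff S \<le> 1" using ff_le1[of "hd S"] by (simp add: seq_value_def)
  qed
  show "\<forall>S. reco_seq 5 {0,1} {2,3} S \<and> (\<forall>A\<in>set S. A \<subseteq> {0,1} \<union> {2,3}) \<longrightarrow> seq_value ff S \<le> 3/4"
  proof (intro allI impI, rule ccontr)
    fix S assume h: "reco_seq 5 {0,1} {2,3} S \<and> (\<forall>A\<in>set S. A \<subseteq> {0,1} \<union> {2,3})"
      and c: "\<not> seq_value ff S \<le> 3/4"
    have ne: "S \<noteq> []" using h by (simp add: reco_seq_def)
    have gt: "\<forall>A\<in>set S. ff A > 3/4" proof
      fix A assume "A \<in> set S"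
      then have "Min (ff ` set S) \<le> ff A" by simp
      then show "ff A > 3/4" using c by (simp add: seq_value_def)
    qed
    have sub: "set S \<subseteq> {{0,1},{2,3}}"
    proof
      fix A assume A: "A \<in> set S"
      then obtain i where i: "i < length S" "A = S!i" by (auto simp: in_set_conv_nth)
      have "card A = 2" using cards[OF h[THEN conjunct1] i(1)] i by simp
      moreover have "A \<subseteq> {0,1,2,3}" using h A by auto
      moreover have "ff A > 3/4" using gt A by blast
      ultimately have "A = {0,1} \<or> A = {2,3}" using pairs[of A] by linarith
      then show "A \<in> {{0,1},{2,3}}" by blast
    qed
    have neq: "{0,1::nat} \<noteq> {2,3}"
    proof
      assume e: "{0,1::nat} = {2,3}"
      have "(0::nat) \<in> {0,1}" by simp
      then have "(0::nat) \<in> {2,3}" by (simp only: e)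
      then show False by simp
    qed
    have hd: "hd S = {0,1}" and lst: "last S = {2,3}"
      and adj: "\<And>i. Suc i < length S \<Longrightarrow> tj_adjacent (S ! i) (S ! Suc i)"
      using h[THEN conjunct1] unfolding reco_seq_def by blast+
    obtain i where i: "Suc i < length S \<and> S!i = {0,1} \<and> S!Suc i = {2,3}"
      using chain[OF ne hd lst neq sub] by (elim exE)
    have "tj_adjacent (S!i) (S!Suc i)" using adj i by blast
    then have "tj_adjacent {0,1} {2,3::nat}" using i by simp
    then show False by (simp add: tj_adjacent_def)
  qed
qed

end
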